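(* Let $n\geq 5$ and let $H$ be a Hamiltonian cycle in the complete graph $K_n$. Then $G=K_n-H$ (the graph on $V(K_n)$ with edge set $E(K_n)\setminus E(H)$) is $2$-swappable.
   Context: For a graph $G$, $A\subseteq E(G)$ and $B\subseteq E(\bar G)$ (edges of the complement), $G-A+B$ denotes the graph on $V(G)$ with edge set $(E(G)\setminus A)\cup B$. $G$ is $2$-swappable if for every $e\in E(G)$ there exist $A\subseteq E(G)$ and $B\subseteq E(\bar G)$ with $e\in A$, $|A|\leq 2$, and $G\cong G-A+B$. *)

theory Defs
  imports Main
begin

text \<open>Simple graphs on a vertex set V are given by an edge set E of 2-element subsets of V.\<close>

definition all_edges :: "'a set \<Rightarrow> 'a set set" where
  "all_edges V = {e. e \<subseteq> V \<and> card e = 2}"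

definition graph_iso :: "'a set \<Rightarrow> 'a set set \<Rightarrow> 'a set set \<Rightarrow> bool" where
  "graph_iso V E1 E2 \<longleftrightarrow>
     (\<exists>f. bij_betw f V V \<and> (\<forall>e \<in> all_edges V. e \<in> E1 \<longleftrightarrow> f ` e \<in> E2))"

definition two_swappable :: "'a set \<Rightarrow> 'a set set \<Rightarrow> bool" where
  "two_swappable V E \<longleftrightarrow>
     (\<forall>e \<in> E. \<exists>A B. A \<subseteq> E \<and> B \<subseteq> all_edges V - E \<and> e \<in> A \<and> card A \<le> 2
                \<and> graph_iso V E ((E - A) \<union> B))"

text \<open>A Hamiltonian cycle of K_n on vertex set V, given by a cyclic ordering xs of all vertices.\<close>
definition is_ham_cycle :: "'a set \<Rightarrow> 'a list \<Rightarrow> bool" where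
  "is_ham_cycle V xs \<longleftrightarrow> distinct xs \<and> set xs = V \<and> length xs \<ge> 3"

definition cycle_edges :: "'a list \<Rightarrow> 'a set set" where
  "cycle_edges xs = {{xs ! i, xs ! ((i + 1) mod length xs)} | i. i < length xs}"

end

theory Submission imports Defs begin

fun pe :: "'a list \<Rightarrow> 'a set set" where
  "pe (x#y#zs) = insert {x,y} (pe (y#zs))"
| "pe _ = {}"

lemma pe_append: "xs \<noteq> [] \<Longrightarrow> ys \<noteq> [] \<Longrightarrow> pe (xs @ ys) = pe xs \<union> pe ys \<union> {{last xs, hd ys}}"
proof (induction xs rule: pe.induct)
  case (1 x y zs) then show ?case by auto
qed (auto simp: neq_Nil_conv)

lemma pe_rev: "pe (rev xs) = pe xs"
proof (induction xs rule: pe.induct)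
  case (1 x y zs)
  have "pe (rev (x#y#zs)) = pe (rev (y#zs) @ [x])" by simp
  also have "\<dots> = pe (rev (y#zs)) \<union> {{y,x}}" by (subst pe_append) (auto simp: last_rev)
  finally show ?case using 1 by auto
qed auto

lemma pe_sub: "e \<in> pe xs \<Longrightarrow> e \<subseteq> set xs"
  by (induction xs rule: pe.induct) auto

lemma pe_nth: "pe xs = {{xs!k, xs!Suc k} | k. Suc k < length xs}"
proof (induction xs rule: pe.induct)
  case (1 x y zs)
  show ?case
  proof (rule set_eqI, rule iffI)
    fix e assume "e \<in> pe (x#y#zs)"
    then show "e \<in> {{(x#y#zs)!k, (x#y#zs)!Suc k} | k. Suc k < length (x#y#zs)}"
    proof (cases "e = {x,y}")
      case True then show ?thesis by force
    next
      case False
      with \<open>e \<in> pe (x#y#zs)\<close> have "e \<in> pe (y#zs)" by simp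
      with 1 obtain k where "e = {(y#zs)!k, (y#zs)!Suc k}" "Suc k < length (y#zs)" by auto
      then show ?thesis by (intro CollectI exI[of _ "Suc k"]) auto
    qed
  next
    fix e assume "e \<in> {{(x#y#zs)!k, (x#y#zs)!Suc k} | k. Suc k < length (x#y#zs)}"
    then obtain k where k: "e = {(x#y#zs)!k, (x#y#zs)!Suc k}" "Suc k < length (x#y#zs)" by auto
    show "e \<in> pe (x#y#zs)"
    proof (cases k)
      case 0 then show ?thesis using k by simp
    next
      case (Suc m) then show ?thesis using k 1 by auto
    qed
  qed
qed auto

lemma cycle_pe: "xs \<noteq> [] \<Longrightarrow> cycle_edges xs = insert {last xs, hd xs} (pe xs)"
proof -
  assume ne: "xs \<noteq> []"
  let ?L = "length xs"
  show ?thesis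
  proof (rule set_eqI, rule iffI)
    fix e assume "e \<in> cycle_edges xs"
    then obtain i where i: "e = {xs!i, xs!((i+1) mod ?L)}" "i < ?L" unfolding cycle_edges_def by auto
    show "e \<in> insert {last xs, hd xs} (pe xs)"
    proof (cases "i + 1 < ?L")
      case True then show ?thesis using i by (auto simp: pe_nth)
    next
      case False then have "i = ?L - 1" using i by auto
      then show ?thesis using i ne by (auto simp: last_conv_nth hd_conv_nth)
    qed
  next
    fix e assume "e \<in> insert {last xs, hd xs} (pe xs)"
    then show "e \<in> cycle_edges xs"
    proof
      assume "e = {last xs, hd xs}"
      then show ?thesis unfolding cycle_edges_def using ne
        by (intro CollectI exI[of _ "?L - 1"]) (auto simp: last_conv_nth hd_conv_nth)
    next
      assume "e \<in> pe xs"
      then obtain k where "e = {xs!k, xs!Suc k}" "Suc k < ?L" by (auto simp: pe_nth)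
      then show ?thesis unfolding cycle_edges_def by (intro CollectI exI[of _ k]) auto
    qed
  qed
qed

lemma cycle_rotate1: "cycle_edges (rotate1 xs) = cycle_edges xs"
proof (cases xs)
  case Nil then show ?thesis by simp
next
  case (Cons x t)
  show ?thesis
  proof (cases t)
    case Nil then show ?thesis using Cons by simp
  next
    case (Cons y s)
    have "cycle_edges (rotate1 xs) = cycle_edges (t @ [x])" using \<open>xs = x#t\<close> by simp
    also have "\<dots> = insert {x, hd t} (pe (t @ [x]))" by (subst cycle_pe) (auto simp: Cons)
    also have "\<dots> = insert {x, hd t} (pe t \<union> {{last t, x}})" by (subst pe_append) (auto simp: Cons)
    finally have r: "cycle_edges (rotate1 xs) = insert {x, hd t} (pe t \<union> {{last t, x}})" .
    have "cycle_edges xs = insert {last t, x} (pe ([x] @ t))" using \<open>xs = x#t\<close> Cons by (subst cycle_pe) auto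
    moreover have "pe ([x] @ t) = pe t \<union> {{x, hd t}}" by (subst pe_append) (auto simp: Cons)
    ultimately show ?thesis using r by auto
  qed
qed

lemma cycle_rotate: "cycle_edges (rotate k xs) = cycle_edges xs"
  by (induction k) (auto simp: cycle_rotate1)

lemma iso_perm:
  assumes dx: "distinct xs" and dy: "distinct ys" and sx: "set xs = V" and sy: "set ys = V"
  shows "graph_iso V (all_edges V - cycle_edges xs) (all_edges V - cycle_edges ys)"
proof -
  have len: "length ys = length xs" using dx dy sx sy distinct_card by metis
  define f where "f v = ys ! (THE i. i < length xs \<and> xs!i = v)" for v
  have fk: "f (xs!k) = ys!k" if "k < length xs" for k
  proof -
    have "(THE i. i < length xs \<and> xs!i = xs!k) = k"
      using that dx by (intro the_equality) (auto simp: nth_eq_iff_index_eq)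
    then show ?thesis by (simp add: f_def)
  qed
  have img: "f ` V = V"
  proof -
    have "f ` V = f ` {xs!k | k. k < length xs}" using sx by (simp add: set_conv_nth)
    also have "\<dots> = {ys!k | k. k < length xs}" using fk by force
    also have "\<dots> = V" using sy len by (simp add: set_conv_nth)
    finally show ?thesis .
  qed
  have inj: "inj_on f V"
  proof (rule inj_onI)
    fix u v assume "u \<in> V" "v \<in> V" "f u = f v"
    then obtain i j where "i < length xs" "j < length xs" "u = xs!i" "v = xs!j"
      using sx by (auto simp: in_set_conv_nth)
    then show "u = v" using \<open>f u = f v\<close> fk dy len by (auto simp: nth_eq_iff_index_eq)
  qed
  have ce: "(`) f ` cycle_edges xs = cycle_edges ys"
  proof -
    have "(`) f ` cycle_edges xs = {f ` {xs ! i, xs ! ((i + 1) mod length xs)} | i. i < length xs}"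
      unfolding cycle_edges_def by blast
    also have "\<dots> = {{ys ! i, ys ! ((i + 1) mod length ys)} | i. i < length ys}"
    proof -
      have "f ` {xs ! i, xs ! ((i + 1) mod length xs)} = {ys ! i, ys ! ((i + 1) mod length ys)}"
        if "i < length xs" for i
      proof -
        have "Suc i mod length xs < length xs" using that by (intro mod_less_divisor) auto
        then show ?thesis using that len fk[of i] fk[of "Suc i mod length xs"] by simp
      qed
      then show ?thesis using len by (metis (no_types, lifting))
    qed
    finally show ?thesis unfolding cycle_edges_def .
  qed
  have cxV: "cycle_edges xs \<subseteq> Pow V"
    unfolding cycle_edges_def using sx
    by (auto intro!: nth_mem mod_less_divisor)
  show ?thesis unfolding graph_iso_def
  proof (intro exI conjI ballI)
    show "bij_betw f V V" using inj img by (simp add: bij_betw_def)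
  next
    fix e assume e: "e \<in> all_edges V"
    then have eV: "e \<subseteq> V" and c2: "card e = 2" by (auto simp: all_edges_def)
    have "f ` e \<subseteq> V" using eV img by auto
    moreover have "card (f ` e) = 2" using c2 card_image[OF inj_on_subset[OF inj eV]] by simp
    ultimately have fe: "f ` e \<in> all_edges V" by (simp add: all_edges_def)
    have "e \<in> cycle_edges xs \<longleftrightarrow> f ` e \<in> cycle_edges ys"
    proof
      assume "e \<in> cycle_edges xs" then show "f ` e \<in> cycle_edges ys" using ce by blast
    next
      assume "f ` e \<in> cycle_edges ys"
      then obtain e' where "e' \<in> cycle_edges xs" "f ` e = f ` e'" using ce by (metis imageE)
      moreover have "e' \<subseteq> V" using cxV \<open>e' \<in> cycle_edges xs\<close> by auto
      ultimately show "e \<in> cycle_edges xs" using inj_on_image_eq_iff[OF inj eV] by auto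
    qed
    then show "e \<in> all_edges V - cycle_edges xs \<longleftrightarrow> f ` e \<in> all_edges V - cycle_edges ys"
      using e fe by auto
  qed
qed

lemma pe4: "u \<noteq> [] \<Longrightarrow> w \<noteq> [] \<Longrightarrow>
  pe (a # u @ b # w) = insert {a, hd u} (insert {last u, b} (insert {b, hd w} (pe u \<union> pe w)))"
proof -
  assume u: "u \<noteq> []" and w: "w \<noteq> []"
  have "pe (a # u @ b # w) = pe ([a] @ (u @ ([b] @ w)))" by simp
  also have "\<dots> = pe [a] \<union> (pe u \<union> (pe [b] \<union> pe w \<union> {{b, hd w}}) \<union> {{last u, b}}) \<union> {{a, hd u}}"
    using u w by (simp add: pe_append del: append_Cons append.simps)
  finally show ?thesis by auto
qed

lemma pe5: "u \<noteq> [] \<Longrightarrow> w \<noteq> [] \<Longrightarrow>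
  pe (a # b # rev u @ w) = insert {a, b} (insert {b, last u} (insert {hd u, hd w} (pe u \<union> pe w)))"
proof -
  assume u: "u \<noteq> []" and w: "w \<noteq> []"
  have "pe (a # b # rev u @ w) = pe ([a] @ ([b] @ (rev u @ w)))" by simp
  also have "\<dots> = pe [a] \<union> (pe [b] \<union> (pe (rev u) \<union> pe w \<union> {{last (rev u), hd w}}) \<union> {{b, hd (rev u)}}) \<union> {{a, b}}"
    using u w by (simp add: pe_append del: append_Cons append.simps)
  finally show ?thesis using u by (auto simp: pe_rev hd_rev last_rev)
qed

lemma pair_edge: "x \<noteq> y \<Longrightarrow> x \<in> V \<Longrightarrow> y \<in> V \<Longrightarrow> {x, y} \<in> all_edges V"
  by (simp add: all_edges_def)

theorem mainTheorem4:
  fixes n :: nat and xs :: "nat list"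
  assumes "n \<ge> 5"
    and "is_ham_cycle {0..<n} xs"
  shows "two_swappable {0..<n} (all_edges {0..<n} - cycle_edges xs)"
proof -
  define V where "V = {0..<n}"
  have dx: "distinct xs" and sx: "set xs = V" using assms(2) by (auto simp: is_ham_cycle_def V_def)
  show ?thesis unfolding two_swappable_def V_def[symmetric]
  proof
    fix e assume eE: "e \<in> all_edges V - cycle_edges xs"
    then obtain a b where ab: "e = {a, b}" "a \<noteq> b" "a \<in> V" "b \<in> V"
      by (auto simp: all_edges_def card_2_iff)
    obtain p q where xpq: "xs = p @ a # q" using ab sx split_list by metis
    define xs' where "xs' = a # q @ p"
    have rot: "rotate (length p) xs = xs'" unfolding xs'_def xpq by (simp add: rotate_append)
    have Cx: "cycle_edges xs = cycle_edges xs'" using rot cycle_rotate by metis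
    have dx': "distinct xs'" and sx': "set xs' = V" using dx sx rot by (metis distinct_rotate, metis set_rotate)
    have "b \<in> set (q @ p)" using ab sx' xs'_def by auto
    then obtain u w where uw: "q @ p = u @ b # w" using split_list by metis
    have xs'uw: "xs' = a # u @ b # w" using uw xs'_def by simp
    have u: "u \<noteq> []"
    proof
      assume "u = []"
      then have "e \<in> cycle_edges xs'" using xs'uw ab by (simp add: cycle_pe)
      then show False using eE Cx by simp
    qed
    have w: "w \<noteq> []"
    proof
      assume "w = []"
      then have "e \<in> cycle_edges xs'" using xs'uw ab u by (simp add: cycle_pe insert_commute)
      then show False using eE Cx by simp
    qed
    define ys where "ys = a # b # rev u @ w"
    have dd: "a \<notin> set u" "a \<notin> set w" "b \<notin> set u" "b \<notin> set w" "set u \<inter> set w = {}"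
      using dx' xs'uw by auto
    have mem: "hd u \<in> set u" "last u \<in> set u" "hd w \<in> set w" "last w \<in> set w"
      using u w by auto
    have inV: "set u \<subseteq> V" "set w \<subseteq> V" using sx' xs'uw by auto
    have peu: "\<forall>x\<in>pe u. x \<subseteq> set u" and pew: "\<forall>x\<in>pe w. x \<subseteq> set w" using pe_sub by blast+
    have CX: "cycle_edges xs = insert {last w, a} (insert {a, hd u} (insert {last u, b} (insert {b, hd w} (pe u \<union> pe w))))"
      using Cx xs'uw u w by (simp add: cycle_pe pe4)
    have CY: "cycle_edges ys = insert {last w, a} (insert {a, b} (insert {b, last u} (insert {hd u, hd w} (pe u \<union> pe w))))"
      unfolding ys_def using u w pe5[OF u w, of a b] by (simp add: cycle_pe del: pe.simps)
    define A where "A = {{a, b}, {hd u, hd w}}"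
    define B where "B = {{a, hd u}, {b, hd w}}"
    have Aall: "A \<subseteq> all_edges V" unfolding A_def using ab dd mem inV by (auto intro!: pair_edge)
    have Ball: "B \<subseteq> all_edges V" unfolding B_def using ab dd mem inV by (auto intro!: pair_edge)
    have n1: "{hd u, hd w} \<notin> pe u"
    proof
      assume "{hd u, hd w} \<in> pe u"
      then have "hd w \<in> set u" using peu by blast
      then show False using mem dd by blast
    qed
    have n2: "{hd u, hd w} \<notin> pe w"
    proof
      assume "{hd u, hd w} \<in> pe w"
      then have "hd u \<in> set w" using pew by blast
      then show False using mem dd by blast
    qed
    have AC: "A \<inter> cycle_edges xs = {}" unfolding A_def CX using ab dd mem peu pew n1 n2
      by (auto simp: doubleton_eq_iff)
    have BC: "B \<subseteq> cycle_edges xs" unfolding B_def CX by auto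
    have g1: "{a, hd u} \<notin> pe u" "{a, hd u} \<notin> pe w" "{b, hd w} \<notin> pe u" "{b, hd w} \<notin> pe w"
      using peu pew dd by blast+
    have g2: "{a, hd u} \<noteq> {last w, a}" "{a, hd u} \<noteq> {last u, b}"
         "{b, hd w} \<noteq> {last w, a}" "{b, hd w} \<noteq> {last u, b}"
      using ab dd mem by (auto simp: doubleton_eq_iff)
    have CmB: "cycle_edges xs - B = insert {last w, a} (insert {last u, b} (pe u \<union> pe w))"
      unfolding CX B_def using g1 g2 by blast
    have bl: "{b, last u} = {last u, b}" by (rule insert_commute)
    have CYe: "cycle_edges ys = (cycle_edges xs - B) \<union> A" unfolding CmB CY A_def bl
      by blast
    have dy: "distinct ys" using dx' xs'uw unfolding ys_def by auto
    have sy: "set ys = V" using sx' xs'uw unfolding ys_def by auto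
    have iso: "graph_iso V (all_edges V - cycle_edges xs) (all_edges V - cycle_edges ys)"
      by (rule iso_perm[OF dx dy sx sy])
    have eq: "(all_edges V - cycle_edges xs) - A \<union> B = all_edges V - cycle_edges ys"
      using CYe AC BC Aall Ball by blast
    show "\<exists>A B. A \<subseteq> all_edges V - cycle_edges xs \<and> B \<subseteq> all_edges V - (all_edges V - cycle_edges xs) \<and>
            e \<in> A \<and> card A \<le> 2 \<and> graph_iso V (all_edges V - cycle_edges xs) (all_edges V - cycle_edges xs - A \<union> B)"
    proof (intro exI conjI)
      show "A \<subseteq> all_edges V - cycle_edges xs" using Aall AC by blast
      show "B \<subseteq> all_edges V - (all_edges V - cycle_edges xs)" using Ball BC by blast
      show "e \<in> A" using ab A_def by simp
      show "card A \<le> 2" unfolding A_def by (simp add: card_insert_if)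
      show "graph_iso V (all_edges V - cycle_edges xs) (all_edges V - cycle_edges xs - A \<union> B)"
        using iso eq by simp
    qed
  qed
qed

end
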